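(* Let $q\colon L\to\mathbb Z$ be an integral quadratic form on a free abelian group $L$ of finite rank, with associated symmetric bilinear form $b$, and let $v\in L$ with $q(v)=\pm2$. Let $q'$ be the $v$-twist of $q$. Then $q$ and $q'$ have the same discriminant group (the cokernel of the correlation homomorphism $L\to L^*$). In particular, $q'$ is non-degenerate (respectively unimodular) if and only if $q$ is non-degenerate (respectively unimodular).
   Context: For $v\in L$ with $q(v)=\pm 2$, let $s_v\colon L\to L$ be the reflection $x\mapsto x-b(x,v)v$ if $q(v)=2$ and $x\mapsto x+b(x,v)v$ if $q(v)=-2$. The $v$-twist of $q$ is the integral quadratic form $q'(x)=b(x,s_vx)$; it is the unique integral quadratic form with $q'(v)=-q(v)$ and $q'(w)=q(w)$ for all $w$ orthogonal to $v$. *)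

theory Defs
  imports "HOL-Analysis.Finite_Cartesian_Product" "HOL-Algebra.Coset"
begin

text \<open>Convention (forced by s_v being a reflection): q(x) = b(x,x) for an integer
 valued symmetric biadditive (= Z-bilinear) form b.\<close>

definition biadditive :: "(int^'n \<Rightarrow> int^'n \<Rightarrow> int) \<Rightarrow> bool" where
  "biadditive b \<longleftrightarrow> (\<forall>x y z. b (x + y) z = b x z + b y z) \<and> (\<forall>x y z. b x (y + z) = b x y + b x z)"

definition integral_qf :: "(int^'n::finite \<Rightarrow> int) \<Rightarrow> bool" where
  "integral_qf q \<longleftrightarrow> (\<exists>b. biadditive b \<and> (\<forall>x y. b x y = b y x) \<and> (\<forall>x. q x = b x x))"

definition bil :: "(int^'n::finite \<Rightarrow> int) \<Rightarrow> int^'n \<Rightarrow> int^'n \<Rightarrow> int" where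
  "bil q x y = (q (x + y) - q x - q y) div 2"

definition refl_v :: "(int^'n::finite \<Rightarrow> int) \<Rightarrow> int^'n \<Rightarrow> int^'n \<Rightarrow> int^'n" where
  "refl_v q v x = (if q v = 2 then x - bil q x v *s v else x + bil q x v *s v)"

definition twist :: "(int^'n::finite \<Rightarrow> int) \<Rightarrow> int^'n \<Rightarrow> int^'n \<Rightarrow> int" where
  "twist q v x = bil q x (refl_v q v x)"

definition dual_group :: "(int^'n::finite \<Rightarrow> int) monoid" where
  "dual_group = \<lparr>carrier = {f. \<forall>x y. f (x + y) = f x + f y},
                 mult = (\<lambda>f g x. f x + g x), one = (\<lambda>x. 0)\<rparr>"

definition correlation :: "(int^'n::finite \<Rightarrow> int) \<Rightarrow> int^'n \<Rightarrow> (int^'n \<Rightarrow> int)" where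
  "correlation q x = (\<lambda>y. bil q x y)"

definition disc_group :: "(int^'n::finite \<Rightarrow> int) \<Rightarrow> (int^'n \<Rightarrow> int) set monoid" where
  "disc_group q = dual_group Mod (range (correlation q))"

definition nondegenerate :: "(int^'n::finite \<Rightarrow> int) \<Rightarrow> bool" where
  "nondegenerate q \<longleftrightarrow> inj (correlation q)"

definition unimodular :: "(int^'n::finite \<Rightarrow> int) \<Rightarrow> bool" where
  "unimodular q \<longleftrightarrow> bij_betw (correlation q) UNIV (carrier dual_group)"

end

theory Submission
  imports Defs
begin

lemma biadd_zero: assumes "biadditive b" shows "b 0 y = 0"
proof -
  have "b (0 + 0) y = b 0 y + b 0 y" using assms unfolding biadditive_def by blast
  thus ?thesis by simp
qed

lemma biadd_neg: assumes "biadditive b" shows "b (- x) y = - b x y"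
proof -
  have "b (x + - x) y = b x y + b (-x) y" using assms unfolding biadditive_def by blast
  thus ?thesis using biadd_zero[OF assms] by simp
qed

lemma biadd_nat: assumes "biadditive b" shows "b (of_nat n *s x) y = of_nat n * b x y"
proof (induction n)
  case 0
  then show ?case using biadd_zero[OF assms] by simp
next
  case (Suc n)
  have "of_nat (Suc n) *s x = x + of_nat n *s x"
    by (simp add: vector_sadd_rdistrib algebra_simps)
  moreover have "b (x + of_nat n *s x) y = b x y + b (of_nat n *s x) y"
    using assms unfolding biadditive_def by blast
  ultimately show ?case using Suc by (simp add: algebra_simps)
qed

lemma biadd_smult: assumes "biadditive b" shows "b (c *s x) y = c * b x y"
proof (cases "c \<ge> 0")
  case True
  define n where "n = nat c"
  have c: "c = of_nat n" using True unfolding n_def by simp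
  then show ?thesis using biadd_nat[OF assms] by simp
next
  case False
  define n where "n = nat (- c)"
  have c: "c = - of_nat n" using False unfolding n_def by simp
  have "c *s x = - (of_nat n *s x)" using c by (simp add: vector_smult_lneg)
  then show ?thesis using biadd_nat[OF assms] biadd_neg[OF assms] c by simp
qed

theorem lemma2p6:
  fixes q :: "int^'n::finite \<Rightarrow> int" and v :: "int^'n"
  assumes "integral_qf q"
    and "q v = 2 \<or> q v = -2"
  shows "disc_group (twist q v) \<cong> disc_group q
    \<and> (nondegenerate (twist q v) \<longleftrightarrow> nondegenerate q)
    \<and> (unimodular (twist q v) \<longleftrightarrow> unimodular q)"
proof -
  obtain b where ba: "biadditive b" and sym: "\<And>x y. b x y = b y x" and qb: "\<And>x. q x = b x x"
    using assms(1) unfolding integral_qf_def by blast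
  have addl: "\<And>x y z. b (x + y) z = b x z + b y z" using ba unfolding biadditive_def by blast
  have addr: "\<And>x y z. b x (y + z) = b x y + b x z" using ba unfolding biadditive_def by blast
  have sml: "\<And>c x y. b (c *s x) y = c * b x y" using biadd_smult[OF ba] .
  have smr: "\<And>c x y. b y (c *s x) = c * b y x" using sml sym by metis
  have bil: "\<And>x y. bil q x y = b x y"
    unfolding bil_def qb addl addr using sym by simp
  define e :: int where "e = (if q v = 2 then -1 else 1)"
  have e2: "e * e = 1" unfolding e_def by simp
  have eq: "e * b v v = -2" using assms(2) unfolding e_def qb by auto
  define s where "s x = x + (e * b x v) *s v" for x
  have refl: "refl_v q v = s"
  proof
    fix x
    show "refl_v q v x = s x"
      unfolding refl_v_def s_def e_def bil by (simp add: vec_eq_iff)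
  qed
  have bs: "b (s x) y = b x y + e * b x v * b v y" for x y
    unfolding s_def addl sml by simp
  have tw: "twist q v x = b x x + e * b x v * b x v" for x
    unfolding twist_def refl bil sym[of x "s x"] bs sym[of v x] by simp
  have biltw: "bil (twist q v) x y = b (s x) y" for x y
  proof -
    have "twist q v (x + y) - twist q v x - twist q v y = 2 * (b x y + e * b x v * b v y)"
      unfolding tw addl addr using sym[of y x] sym[of y v] by (simp add: algebra_simps)
    thus ?thesis unfolding bil_def bs by simp
  qed
  have ss: "s (s x) = x" for x
  proof -
    have "b (s x) v = b x v + b x v * (e * b v v)" unfolding bs by (simp add: algebra_simps)
    also have "\<dots> = - b x v" unfolding eq by simp
    finally have h: "b (s x) v = - b x v" .
    show ?thesis unfolding s_def[of "s x"] h by (simp add: s_def vec_eq_iff algebra_simps)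
  qed
  have bij: "bij s" by (metis bij_iff ss)
  have corr: "correlation (twist q v) = correlation q \<circ> s"
    unfolding correlation_def fun_eq_iff biltw bil by simp
  have rng: "range (correlation (twist q v)) = range (correlation q)"
    unfolding corr image_comp[symmetric] using bij by (simp add: bij_is_surj)
  have "disc_group (twist q v) = disc_group q" unfolding disc_group_def rng ..
  moreover have "nondegenerate (twist q v) \<longleftrightarrow> nondegenerate q"
    unfolding nondegenerate_def corr using bij
    by (metis bij_betw_def inj_compose inj_on_imageI bij_is_surj)
  moreover have "unimodular (twist q v) \<longleftrightarrow> unimodular q"
    unfolding unimodular_def corr using bij
    by (metis bij_betw_comp_iff bij_is_surj bij_betw_trans)
  ultimately show ?thesis by simp
qed

end
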